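(* Let $V$ and $W$ be finite-dimensional real inner-product spaces and $T:V\to W$ a linear map. Let $(T_k)$ be a sequence of geometric functions $V\to W$ converging to $T$, and suppose there is a real number $p>0$ such that for every $k$, $T_k$ has a conformality factor $r_k$ with $p\le r_k$. Then there exists $K$ such that $\mathrm{rank}(T_k)=\mathrm{rank}(T)$ for all $k>K$.
   Context: A linear map $S:V\to W$ between real inner-product spaces is a geometric function if there exist a subspace $C\subset V$ with $V=\ker S\oplus C$ and a number $r>0$ such that $\langle S u,S v\rangle=r\langle u,v\rangle$ for all $u,v\in C$; $r$ is called a conformality factor of $S$ and $C$ a Conf subspace. Convergence is with respect to the operator norm on linear maps $V\to W$. *)

theory Defs
  imports "HOL-Analysis.Analysis"
begin

definition conf_subspace :: "('a::real_inner \<Rightarrow> 'b::real_inner) \<Rightarrow> 'a set \<Rightarrow> real \<Rightarrow> bool" where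
  "conf_subspace S C r \<longleftrightarrow>
     subspace C \<and>
     {x. S x = 0} \<inter> C = {0} \<and>
     {x + y | x y. S x = 0 \<and> y \<in> C} = UNIV \<and>
     r > 0 \<and>
     (\<forall>u\<in>C. \<forall>v\<in>C. inner (S u) (S v) = r * inner u v)"

definition conformality_factor :: "('a::real_inner \<Rightarrow> 'b::real_inner) \<Rightarrow> real \<Rightarrow> bool" where
  "conformality_factor S r \<longleftrightarrow> (\<exists>C. conf_subspace S C r)"

definition geometric_function :: "('a::real_inner \<Rightarrow> 'b::real_inner) \<Rightarrow> bool" where
  "geometric_function S \<longleftrightarrow> linear S \<and> (\<exists>r. conformality_factor S r)"

definition lin_rank :: "('a::euclidean_space \<Rightarrow> 'b::euclidean_space) \<Rightarrow> nat" where
  "lin_rank S = dim (range S)"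

end

theory Submission
  imports Defs
begin

lemma inj_sub_dim:
  fixes f :: "'a::euclidean_space \<Rightarrow> 'b::euclidean_space"
  assumes "linear f" "subspace U" "\<forall>x\<in>U. f x = 0 \<longrightarrow> x = 0"
  shows "dim (f ` U) = dim U"
proof -
  have "inj_on f (span U)"
  proof (rule inj_onI)
    fix x y assume xy: "x \<in> span U" "y \<in> span U" "f x = f y"
    have sp: "span U = U" using assms(2) by (metis span_eq_iff)
    have "x - y \<in> U" using xy(1,2) assms(2) unfolding sp by (simp add: subspace_diff)
    moreover have "f (x - y) = 0" using xy(3) assms(1) by (simp add: linear_diff)
    ultimately show "x = y" using assms(3) by auto
  qed
  then show ?thesis by (rule dim_image_eq[OF assms(1)])
qed

lemma lower_part:
  fixes T :: "'a::euclidean_space \<Rightarrow>\<^sub>L 'b::euclidean_space"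
  obtains e and U :: "'a set" where "e > 0" "subspace U" "dim U = lin_rank (blinfun_apply T)"
    "\<And>S. norm (S - T) < e \<Longrightarrow> dim U \<le> lin_rank (blinfun_apply S)"
proof -
  define K where "K = {x. blinfun_apply T x = 0}"
  define U where "U = {z. \<forall>w\<in>K. orthogonal z w}"
  have lT: "linear (blinfun_apply T)" by (simp add: blinfun.bounded_linear_right bounded_linear.linear)
  have sK: "subspace K" unfolding K_def using lT by (simp add: linear_subspace_kernel)
  have sU: "subspace U" unfolding U_def orthogonal_def
    by (auto simp: subspace_def inner_add_left)
  have injU: "\<forall>x\<in>U. blinfun_apply T x = 0 \<longrightarrow> x = 0"
    unfolding U_def K_def orthogonal_def by auto
  have img: "blinfun_apply T ` U = range (blinfun_apply T)"
  proof
    show "range (blinfun_apply T) \<subseteq> blinfun_apply T ` U"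
    proof
      fix v assume "v \<in> range (blinfun_apply T)"
      then obtain x where x: "v = blinfun_apply T x" by auto
      obtain y z where yz: "y \<in> span K" "\<And>w. w \<in> span K \<Longrightarrow> orthogonal z w" "x = y + z"
        using orthogonal_subspace_decomp_exists by blast
      have "y \<in> K" using yz(1) sK by (metis span_eq_iff)
      then have "blinfun_apply T y = 0" unfolding K_def by simp
      then have "v = blinfun_apply T z" using x yz(3) by (simp add: blinfun.add_right)
      moreover have "z \<in> U" unfolding U_def using yz(2) span_base by blast
      ultimately show "v \<in> blinfun_apply T ` U" by blast
    qed
  qed auto
  have dU: "dim U = lin_rank (blinfun_apply T)"
    unfolding lin_rank_def using inj_sub_dim[OF lT sU injU] img by simp
  obtain e where e: "e > 0" "\<forall>x\<in>U. e * norm x \<le> norm (blinfun_apply T x)"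
    using injective_imp_isometric[OF closed_subspace[OF sU] sU blinfun.bounded_linear_right injU] by blast
  have "dim U \<le> lin_rank (blinfun_apply S)" if S: "norm (S - T) < e" for S
  proof -
    have lS: "linear (blinfun_apply S)" by (simp add: blinfun.bounded_linear_right bounded_linear.linear)
    have injS: "\<forall>x\<in>U. blinfun_apply S x = 0 \<longrightarrow> x = 0"
    proof (intro ballI impI)
      fix x assume x: "x \<in> U" "blinfun_apply S x = 0"
      have "blinfun_apply (S - T) x = - blinfun_apply T x" using x(2) by (simp add: blinfun.diff_left)
      then have "norm (blinfun_apply T x) \<le> norm (S - T) * norm x"
        by (metis norm_blinfun norm_minus_cancel)
      with e x(1) have "e * norm x \<le> norm (S - T) * norm x" by force
      then have "norm x \<le> 0"
      proof (rule contrapos_pp)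
        assume "\<not> norm x \<le> 0"
        then have "norm x > 0" by simp
        then have "norm (S - T) * norm x < e * norm x" using S by simp
        then show "\<not> e * norm x \<le> norm (S - T) * norm x" by simp
      qed
      then show "x = 0" by simp
    qed
    have "dim U = dim (blinfun_apply S ` U)" using inj_sub_dim[OF lS sU injS] by simp
    also have "\<dots> \<le> lin_rank (blinfun_apply S)" unfolding lin_rank_def by (rule dim_subset) auto
    finally show ?thesis .
  qed
  then show ?thesis by (rule that[OF e(1) sU dU])
qed

lemma upper_part:
  fixes T S :: "'a::euclidean_space \<Rightarrow>\<^sub>L 'b::euclidean_space"
  assumes "conf_subspace (blinfun_apply S) C r" "p \<le> r" "p > 0" "norm (S - T) < sqrt p"
  shows "lin_rank (blinfun_apply S) \<le> lin_rank (blinfun_apply T)"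
proof -
  note H = assms(1)[unfolded conf_subspace_def]
  have sC: "subspace C" using H by (rule conjunct1)
  have kC: "{x. blinfun_apply S x = 0} \<inter> C = {0}" using H[THEN conjunct2, THEN conjunct1] .
  have sum: "{x + y | x y. blinfun_apply S x = 0 \<and> y \<in> C} = UNIV"
    using H[THEN conjunct2, THEN conjunct2, THEN conjunct1] .
  have ip: "\<forall>u\<in>C. \<forall>v\<in>C. inner (blinfun_apply S u) (blinfun_apply S v) = r * inner u v"
    using H[THEN conjunct2, THEN conjunct2, THEN conjunct2, THEN conjunct2] .
  have lS: "linear (blinfun_apply S)" by (simp add: blinfun.bounded_linear_right bounded_linear.linear)
  have lT: "linear (blinfun_apply T)" by (simp add: blinfun.bounded_linear_right bounded_linear.linear)
  have low: "sqrt p * norm u \<le> norm (blinfun_apply S u)" if "u \<in> C" for u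
  proof -
    have e1: "inner (blinfun_apply S u) (blinfun_apply S u) = r * inner u u" using ip that by blast
    have "(sqrt p * norm u)^2 = p * inner u u"
      using assms(3) by (simp add: power_mult_distrib power2_norm_eq_inner)
    also have "\<dots> \<le> r * inner u u" using assms(2) by (simp add: mult_right_mono)
    also have "\<dots> = (norm (blinfun_apply S u))^2" using e1 by (simp add: power2_norm_eq_inner)
    finally show ?thesis by (rule power2_le_imp_le) simp
  qed
  have injT: "\<forall>x\<in>C. blinfun_apply T x = 0 \<longrightarrow> x = 0"
  proof (intro ballI impI)
    fix x assume x: "x \<in> C" "blinfun_apply T x = 0"
    have "blinfun_apply (S - T) x = blinfun_apply S x" using x(2) by (simp add: blinfun.diff_left)
    then have "norm (blinfun_apply S x) \<le> norm (S - T) * norm x"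
      by (metis norm_blinfun)
    with low[OF x(1)] have "sqrt p * norm x \<le> norm (S - T) * norm x" by linarith
    then have "norm x \<le> 0"
    proof (rule contrapos_pp)
      assume "\<not> norm x \<le> 0"
      then have "norm x > 0" by simp
      then have "norm (S - T) * norm x < sqrt p * norm x" using assms(4) by simp
      then show "\<not> sqrt p * norm x \<le> norm (S - T) * norm x" by simp
    qed
    then show "x = 0" by simp
  qed
  have injS: "\<forall>x\<in>C. blinfun_apply S x = 0 \<longrightarrow> x = 0" using kC by blast
  have rS: "range (blinfun_apply S) = blinfun_apply S ` C"
  proof
    show "range (blinfun_apply S) \<subseteq> blinfun_apply S ` C"
    proof
      fix v assume "v \<in> range (blinfun_apply S)"
      then obtain x where x: "v = blinfun_apply S x" by auto
      have "x \<in> {x + y | x y. blinfun_apply S x = 0 \<and> y \<in> C}" unfolding sum by (rule UNIV_I)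
      then obtain a c where "x = a + c" "blinfun_apply S a = 0" "c \<in> C" by blast
      then show "v \<in> blinfun_apply S ` C" using x by (simp add: blinfun.add_right)
    qed
  qed auto
  have "lin_rank (blinfun_apply S) = dim C"
    unfolding lin_rank_def rS using inj_sub_dim[OF lS sC injS] .
  also have "\<dots> = dim (blinfun_apply T ` C)" using inj_sub_dim[OF lT sC injT] by simp
  also have "\<dots> \<le> lin_rank (blinfun_apply T)" unfolding lin_rank_def by (rule dim_subset) auto
  finally show ?thesis .
qed

theorem mainTheorem6:
  fixes T :: "'a::euclidean_space \<Rightarrow>\<^sub>L 'b::euclidean_space"
    and Tk :: "nat \<Rightarrow> ('a \<Rightarrow>\<^sub>L 'b)"
    and p :: real
  assumes geo: "\<And>k. geometric_function (blinfun_apply (Tk k))"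
    and conv: "Tk \<longlonglongrightarrow> T"
    and p_pos: "p > 0"
    and factor: "\<And>k. \<exists>r. conformality_factor (blinfun_apply (Tk k)) r \<and> p \<le> r"
  shows "\<exists>K. \<forall>k>K. lin_rank (blinfun_apply (Tk k)) = lin_rank (blinfun_apply T)"
proof -
  obtain e and U :: "'a set" where e: "e > 0" "dim U = lin_rank (blinfun_apply T)"
    "\<And>S. norm (S - T) < e \<Longrightarrow> dim U \<le> lin_rank (blinfun_apply S)"
    using lower_part[of T] by blast
  have "min e (sqrt p) > 0" using e(1) p_pos by simp
  with conv have "eventually (\<lambda>k. dist (Tk k) T < min e (sqrt p)) sequentially"
    by (rule tendstoD)
  then obtain N where N: "\<And>k. k \<ge> N \<Longrightarrow> norm (Tk k - T) < min e (sqrt p)"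
    unfolding eventually_sequentially dist_norm by blast
  have "lin_rank (blinfun_apply (Tk k)) = lin_rank (blinfun_apply T)" if "k > N" for k
  proof -
    have nk: "norm (Tk k - T) < e" "norm (Tk k - T) < sqrt p" using N[of k] that by auto
    obtain r C where rC: "conf_subspace (blinfun_apply (Tk k)) C r" "p \<le> r"
      using factor[of k] unfolding conformality_factor_def by blast
    show ?thesis using upper_part[OF rC p_pos nk(2)] e(2) e(3)[OF nk(1)] by simp
  qed
  then show ?thesis by blast
qed

end
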